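(* Let $A$ be a real $m \times N$ matrix and let $\mathcal{N}(A)$ denote its null space. For a vector $\mathbf{w}$, let $k_{-,\mathbf{w}}$ and $k_{+,\mathbf{w}}$ denote the number of negative entries and the number of positive entries of $\mathbf{w}$, respectively. Let $k$ be a nonnegative integer. (i) If $$k < \min_{\mathbf{w} \in \mathcal{N}(A),\, \mathbf{w} \neq 0} \max\{k_{-,\mathbf{w}}, k_{+,\mathbf{w}}\},$$ then for every nonnegative vector $\mathbf{x}\in\mathbb{R}^N$ with at most $k$ nonzero entries, $\mathbf{x}$ is the unique sparsest nonnegative vector $\tilde{\mathbf{x}}$ satisfying $A\tilde{\mathbf{x}} = \mathbf{y}$, where $\mathbf{y}=A\mathbf{x}$. (ii) Conversely, if $$k \geq \min_{\mathbf{w} \in \mathcal{N}(A),\, \mathbf{w} \neq 0} \max\{k_{-,\mathbf{w}}, k_{+,\mathbf{w}}\},$$ then there exists a nonnegative vector $\mathbf{x}$ with at most $k$ nonzero entries which is not the unique sparsest nonnegative vector $\tilde{\mathbf{x}}$ satisfying $A\tilde{\mathbf{x}} = A\mathbf{x}$.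
   Context: A vector is called $k$-sparse if it has at most $k$ nonzero entries. "Sparsest" means having the fewest nonzero entries. *)

theory Defs
  imports "HOL-Analysis.Analysis" "HOL-Library.Extended_Nat"
begin

definition nneg_count :: "real ^ 'n \<Rightarrow> nat" where
  "nneg_count w = card {i. w $ i < 0}"

definition npos_count :: "real ^ 'n \<Rightarrow> nat" where
  "npos_count w = card {i. w $ i > 0}"

definition nnz :: "real ^ 'n \<Rightarrow> nat" where
  "nnz x = card {i. x $ i \<noteq> 0}"

definition nonneg_vec :: "real ^ 'n \<Rightarrow> bool" where
  "nonneg_vec x \<longleftrightarrow> (\<forall>i. x $ i \<ge> 0)"

text \<open>min over nonzero null-space vectors of max(k_-, k_+); the minimum over the
  empty set (trivial null space) is taken to be infinity.\<close>
definition null_minmax :: "real ^ 'n ^ 'm \<Rightarrow> enat" where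
  "null_minmax A = (INF w \<in> {w. A *v w = 0 \<and> w \<noteq> 0}.
       enat (max (nneg_count w) (npos_count w)))"

definition sparsest_nonneg_sol :: "real ^ 'n ^ 'm \<Rightarrow> real ^ 'm \<Rightarrow> real ^ 'n \<Rightarrow> bool" where
  "sparsest_nonneg_sol A y x \<longleftrightarrow> nonneg_vec x \<and> A *v x = y \<and>
     (\<forall>z. nonneg_vec z \<and> A *v z = y \<longrightarrow> nnz x \<le> nnz z)"

definition unique_sparsest_nonneg_sol :: "real ^ 'n ^ 'm \<Rightarrow> real ^ 'm \<Rightarrow> real ^ 'n \<Rightarrow> bool" where
  "unique_sparsest_nonneg_sol A y x \<longleftrightarrow> sparsest_nonneg_sol A y x \<and>
     (\<forall>z. sparsest_nonneg_sol A y z \<longrightarrow> z = x)"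

end

theory Submission
  imports Defs
begin

lemma nm_le:
  fixes A :: "real ^ 'n ^ 'm"
  assumes x: "nonneg_vec x" and z: "nonneg_vec z" and eq: "A *v z = A *v x" and ne: "z \<noteq> x"
  shows "null_minmax A \<le> enat (max (nnz x) (nnz z))"
proof -
  define w where "w = z - x"
  have Aw: "A *v w = 0" using eq by (simp add: w_def matrix_vector_mult_diff_distrib)
  have wne: "w \<noteq> 0" using ne by (simp add: w_def)
  have "null_minmax A \<le> enat (max (nneg_count w) (npos_count w))"
    unfolding null_minmax_def by (rule INF_lower) (use Aw wne in auto)
  moreover have "nneg_count w \<le> nnz x"
    unfolding nneg_count_def nnz_def
  proof (rule card_mono, simp, rule subsetI)
      fix i assume "i \<in> {i. w $ i < 0}"
      moreover have "z $ i \<ge> 0" using z by (simp add: nonneg_vec_def)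
      ultimately show "i \<in> {i. x $ i \<noteq> 0}" by (auto simp: w_def)
    qed
  moreover have "npos_count w \<le> nnz z"
    unfolding npos_count_def nnz_def
  proof (rule card_mono, simp, rule subsetI)
      fix i assume "i \<in> {i. w $ i > 0}"
      moreover have "x $ i \<ge> 0" using x by (simp add: nonneg_vec_def)
      ultimately show "i \<in> {i. z $ i \<noteq> 0}" by (auto simp: w_def)
    qed
  ultimately show ?thesis
    by (meson enat_ord_simps(1) max.mono order_trans)
qed

lemma part2:
  fixes A :: "real ^ 'n ^ 'm"
  assumes w: "A *v w = 0" "w \<noteq> 0" and cmp: "nneg_count w \<le> npos_count w"
  shows "\<exists>x. nonneg_vec x \<and> nnz x = npos_count w \<and> \<not> unique_sparsest_nonneg_sol A (A *v x) x"
proof -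
  define p where "p = (\<chi> i. max (w$i) 0)"
  define q where "q = (\<chi> i. max (- (w$i)) 0)"
  have wpq: "w = p - q" by (auto simp: p_def q_def vec_eq_iff max_def)
  have Aeq: "A *v q = A *v p" using w(1) wpq by (simp add: matrix_vector_mult_diff_distrib)
  have pq: "p \<noteq> q" using w(2) wpq by auto
  have np: "nnz p = npos_count w" unfolding nnz_def npos_count_def p_def
    by (rule arg_cong[where f=card]) (auto simp: max_def)
  have nq: "nnz q = nneg_count w" unfolding nnz_def nneg_count_def q_def
    by (rule arg_cong[where f=card]) (auto simp: max_def)
  have pn: "nonneg_vec p" "nonneg_vec q" by (auto simp: nonneg_vec_def p_def q_def)
  have "\<not> unique_sparsest_nonneg_sol A (A *v p) p"
  proof
    assume u: "unique_sparsest_nonneg_sol A (A *v p) p"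
    hence "nnz p \<le> nnz q" using pn Aeq by (auto simp: unique_sparsest_nonneg_sol_def sparsest_nonneg_sol_def)
    hence "sparsest_nonneg_sol A (A *v p) q" using u pn Aeq np nq cmp
      by (auto simp: unique_sparsest_nonneg_sol_def sparsest_nonneg_sol_def)
    thus False using u pq by (auto simp: unique_sparsest_nonneg_sol_def)
  qed
  thus ?thesis using pn np by blast
qed

theorem theorem1:
  fixes A :: "real ^ 'n ^ 'm" and k :: nat
  shows "(enat k < null_minmax A \<longrightarrow>
            (\<forall>x. nonneg_vec x \<and> nnz x \<le> k \<longrightarrow> unique_sparsest_nonneg_sol A (A *v x) x))
       \<and> (enat k \<ge> null_minmax A \<longrightarrow>
            (\<exists>x. nonneg_vec x \<and> nnz x \<le> k \<and> \<not> unique_sparsest_nonneg_sol A (A *v x) x))"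
proof safe
  fix x :: "real^'n" assume lt: "enat k < null_minmax A" and x: "nonneg_vec x" "nnz x \<le> k"
  have C: "z = x" if "nonneg_vec z" "A *v z = A *v x" "nnz z \<le> nnz x" for z
  proof (rule ccontr)
    assume "z \<noteq> x"
    hence "null_minmax A \<le> enat (max (nnz x) (nnz z))" using nm_le x that by blast
    also have "\<dots> \<le> enat k" using that x by simp
    finally show False using lt by simp
  qed
  have sp: "sparsest_nonneg_sol A (A *v x) x"
    unfolding sparsest_nonneg_sol_def using x C
    by (metis nat_le_linear)
  show "unique_sparsest_nonneg_sol A (A *v x) x"
    unfolding unique_sparsest_nonneg_sol_def using sp C
    by (auto simp: sparsest_nonneg_sol_def)
next
  assume le: "null_minmax A \<le> enat k"
  define S where "S = {w. A *v w = 0 \<and> w \<noteq> 0}"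
  define f where "f = (\<lambda>w::real^'n. enat (max (nneg_count w) (npos_count w)))"
  have nm: "null_minmax A = Inf (f ` S)" by (simp add: null_minmax_def S_def f_def)
  have "S \<noteq> {}"
  proof
    assume "S = {}" then have "null_minmax A = \<infinity>" using nm by (simp add: top_enat_def)
    thus False using le by simp
  qed
  hence "Inf (f ` S) \<in> f ` S" unfolding Inf_enat_def by (auto intro: LeastI)
  then obtain w where wS: "w \<in> S" and fw: "f w = null_minmax A" using nm by auto
  have mk: "max (nneg_count w) (npos_count w) \<le> k" proof -
    have "enat (max (nneg_count w) (npos_count w)) \<le> enat k" using fw le by (simp add: f_def)
    thus ?thesis by simp
  qed
  show "\<exists>x. nonneg_vec x \<and> nnz x \<le> k \<and> \<not> unique_sparsest_nonneg_sol A (A *v x) x"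
  proof (cases "nneg_count w \<le> npos_count w")
    case True
    then show ?thesis using part2[of A w] wS mk by (fastforce simp: S_def)
  next
    case False
    have "nneg_count (-w) = npos_count w" "npos_count (-w) = nneg_count w"
      by (auto simp: nneg_count_def npos_count_def)
    moreover have "A *v (-w) = 0" "-w \<noteq> 0" using wS
      by (auto simp: S_def matrix_vector_mult_diff_distrib[where x=0, simplified])
    ultimately show ?thesis using part2[of A "-w"] False mk by fastforce
  qed
qed

end
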